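(* Let $\vec{k}=(k_1,\dots,k_n)$ be a vector of positive integers and let $\overline{D}$ be a $\vec{k}$-Dyck path with $\operatorname{area}(\overline{D})>0$. Let $\mathbb{S}$ be the rightmost red arrow of $\overline{D}$ among the red arrows whose starting rank is maximal among all red arrows, and let $\mathbb{W}$ be the step immediately following $\mathbb{S}$ (which is a blue arrow). Let $\overline{D}'$ be the word obtained from $\overline{D}$ by interchanging the two adjacent letters $\mathbb{S}$ and $\mathbb{W}$ (so $\overline{D}'$ is again a $\vec{k}$-Dyck path, with $\operatorname{area}(\overline{D}')=\operatorname{area}(\overline{D})-1$). Let $D=\Phi(\overline{D})$ and $D'=\Phi(\overline{D}')$. Then $$\operatorname{dinv}(\overline{D})-\operatorname{dinv}(\overline{D}')=\operatorname{area}(D)-\operatorname{area}(D').$$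
   Context: For a vector $\vec{k}=(k_1,\dots,k_n)$ of positive integers put $|\vec{k}|=\sum_i k_i$. A $\vec{k}$-Dyck path is a word $D=\sigma_1\cdots\sigma_N$, $N=|\vec{k}|+n$, consisting of $n$ red arrows and $|\vec{k}|$ blue arrows $W$, where the $j$-th red arrow from the left is $S^{k_j}$ of length $\ell=k_j$ and value $k_j$, and each $W$ has value $-1$. Ranks: $r_1=0$, $r_{m+1}=r_m+(\text{value of }\sigma_m)$, required to satisfy $r_m\ge0$ for all $m$. The starting rank of $\sigma_m$ is $r(\sigma_m)=r_m$ and its end rank is $\dot r(\sigma_m)=r_{m+1}$. (Geometrically: a path from $(0,0)$ to $(N,0)$ never below the horizontal axis with up steps $(1,k_j)$ and down steps $(1,-1)$; ranks are starting heights.) Write $A<B$ if step $A$ is left of step $B$, and $A<^sB$ if $r(A)<r(B)$, or $r(A)=r(B)$ and $B<A$. The sweep map $\Phi$ sends $D$ to the word listing its steps in increasing $<^s$ order; this is again a Dyck path for some rearrangement of $\vec{k}$. $\operatorname{area}(D)=\sum_S r(S)$ over red arrows $S$. $\operatorname{dinv}(D)$ = (sweep dinv) + (red dinv), where sweep dinv is the number of pairs (blue arrow $W$, red arrow $S$) with $W<S$ and $W$ sweeping $S$, i.e. $W$ intersects $S$ when moved to the right past $S$ along a line of slope $0<\epsilon\ll1$; equivalently $r(S)\le r(W)\le\dot r(S)$; and red dinv is $\sum_{S_i<S_j}\chi(r(S_i)\ge r(S_j)\ \&\ \dot r(S_j)>\dot r(S_i))(\dot r(S_j)-\dot r(S_i))+\sum_{S_i<S_j}\chi(r(S_i)<r(S_j)\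 \&\ \dot r(S_j)<\dot r(S_i))(\dot r(S_i)-\dot r(S_j))$ over pairs of red arrows. *)

theory Defs
  imports Main "HOL-Library.Product_Lexorder"
begin

text \<open>A step of a word: a red arrow S^k (value k) or a blue arrow W (value -1).\<close>
datatype step = Red nat | Blue

fun step_val :: "step \<Rightarrow> int" where
  "step_val (Red k) = int k"
| "step_val Blue = -1"

fun is_red :: "step \<Rightarrow> bool" where
  "is_red (Red k) = True"
| "is_red Blue = False"

text \<open>Positions are 0-indexed. rank w i is the starting rank of step i
  (r_{i+1} in the paper); rank w (Suc i) is its end rank.\<close>
definition rank :: "step list \<Rightarrow> nat \<Rightarrow> int" where
  "rank w i = (\<Sum>m<i. step_val (w ! m))"

definition red_lengths :: "step list \<Rightarrow> nat list" where
  "red_lengths w = [k. Red k \<leftarrow> w]"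

definition is_kdyck :: "nat list \<Rightarrow> step list \<Rightarrow> bool" where
  "is_kdyck kv w \<longleftrightarrow>
     red_lengths w = kv \<and>
     length (filter (\<lambda>x. x = Blue) w) = sum_list kv \<and>
     (\<forall>m\<le>length w. rank w m \<ge> 0)"

definition sweep :: "step list \<Rightarrow> step list" where
  "sweep w = map (\<lambda>i. w ! i) (sort_key (\<lambda>i. (rank w i, - int i)) [0..<length w])"

definition area :: "step list \<Rightarrow> int" where
  "area w = (\<Sum>i\<in>{i. i < length w \<and> is_red (w ! i)}. rank w i)"

definition sweep_dinv :: "step list \<Rightarrow> int" where
  "sweep_dinv w = int (card {(i, j). i < j \<and> j < length w \<and> w ! i = Blue \<and> is_red (w ! j)
                               \<and> rank w j \<le> rank w i \<and> rank w i \<le> rank w (Suc j)})"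

definition red_dinv :: "step list \<Rightarrow> int" where
  "red_dinv w = (\<Sum>(i, j)\<in>{(i, j). i < j \<and> j < length w \<and> is_red (w ! i) \<and> is_red (w ! j)}.
      (if rank w i \<ge> rank w j \<and> rank w (Suc j) > rank w (Suc i)
       then rank w (Suc j) - rank w (Suc i) else 0)
    + (if rank w i < rank w j \<and> rank w (Suc j) < rank w (Suc i)
       then rank w (Suc i) - rank w (Suc j) else 0))"

definition dinv :: "step list \<Rightarrow> int" where
  "dinv w = sweep_dinv w + red_dinv w"

definition swap_adj :: "step list \<Rightarrow> nat \<Rightarrow> step list" where
  "swap_adj w s = w[s := w ! Suc s, Suc s := w ! s]"

end

theory Submission
  imports Defs
begin

lemma rank_0[simp]: "rank w 0 = 0" by (simp add: rank_def)
lemma rank_Suc: "rank w (Suc i) = rank w i + step_val (w ! i)" by (simp add: rank_def)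

lemma step_sum: "sum_list (map step_val w) = int (sum_list (red_lengths w)) - int (length (filter (\<lambda>x. x = Blue) w))"
proof (induction w)
  case Nil then show ?case by (simp add: red_lengths_def)
next
  case (Cons x w) then show ?case by (cases x) (auto simp: red_lengths_def)
qed

lemma rank_len: "rank w (length w) = sum_list (map step_val w)"
  by (simp add: rank_def sum_list_sum_nth atLeast0LessThan)

lemma red_in_lengths: "i < length w \<Longrightarrow> w ! i = Red k \<Longrightarrow> k \<in> set (red_lengths w)"
proof (induction w arbitrary: i)
  case Nil then show ?case by simp
next
  case (Cons x w) then show ?case
    by (cases i) (auto simp: red_lengths_def split: step.splits)
qed

lemma cross_sum:
  assumes "p \<le> q"
  shows "(\<Sum>i\<in>{p..<q}. (if w ! i = Blue \<and> rank w i = L then 1 else 0)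
      - (if is_red (w ! i) \<and> rank w i < L \<and> L \<le> rank w (Suc i) then 1 else (0::int)))
     = (if L \<le> rank w p then 1 else 0) - (if L \<le> rank w q then 1 else 0)"
  using assms
proof (induction q rule: dec_induct)
  case base then show ?case by simp
next
  case (step q)
  then show ?case
    by (cases "w ! q") (auto simp: rank_Suc)
qed

lemma split_one:
  assumes "Suc s < n"
  shows "(\<Sum>x<n. f x) = (\<Sum>x\<in>{..<n} - {s, Suc s}. f x) + f s + (f (Suc s) :: int)"
proof -
  have e: "{..<n} = ({..<n} - {s, Suc s}) \<union> {s, Suc s}" using assms by auto
  show ?thesis by (subst e, subst sum.union_disjoint) auto
qed

lemma dsplit:
  assumes "Suc s < n"
  shows "(\<Sum>x<n. \<Sum>y<n. H x y) = (\<Sum>x\<in>{..<n} - {s, Suc s}. \<Sum>y\<in>{..<n} - {s, Suc s}. H x y)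
     + (\<Sum>j\<in>{..<n} - {s, Suc s}. H s j + H (Suc s) j + H j s + H j (Suc s))
     + H s s + H s (Suc s) + H (Suc s) s + (H (Suc s) (Suc s) :: int)"
  by (simp add: split_one[OF assms] sum.distrib algebra_simps)

lemma sorted_prefix_set:
  fixes key :: "nat \<Rightarrow> 'b::linorder"
  assumes d: "distinct xs" and so: "sorted (map key xs)" and inj: "inj_on key (set xs)"
    and p: "p < length xs"
  shows "(\<lambda>q. xs ! q) ` {..<p} = {i \<in> set xs. key i < key (xs ! p)}"
proof
  have m: "key (xs ! i) \<le> key (xs ! j)" if "i \<le> j" "j < length xs" for i j
    using so that by (auto simp: sorted_iff_nth_mono)
  show "(\<lambda>q. xs ! q) ` {..<p} \<subseteq> {i \<in> set xs. key i < key (xs ! p)}"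
  proof
    fix i assume "i \<in> (\<lambda>q. xs ! q) ` {..<p}"
    then obtain q where q: "q < p" "i = xs ! q" by auto
    have "xs ! q \<noteq> xs ! p" using d q p by (simp add: nth_eq_iff_index_eq)
    then have "key (xs ! q) \<noteq> key (xs ! p)" using inj q p by (auto dest: inj_onD)
    moreover have "key (xs ! q) \<le> key (xs ! p)" using m q p by simp
    ultimately show "i \<in> {i \<in> set xs. key i < key (xs ! p)}" using q p by auto
  qed
  show "{i \<in> set xs. key i < key (xs ! p)} \<subseteq> (\<lambda>q. xs ! q) ` {..<p}"
  proof
    fix i assume i: "i \<in> {i \<in> set xs. key i < key (xs ! p)}"
    then obtain q where q: "q < length xs" "i = xs ! q" by (auto simp: in_set_conv_nth)
    have "q < p"
    proof (rule ccontr)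
      assume "\<not> q < p" then have "key (xs ! p) \<le> key (xs ! q)" using m q by simp
      then show False using i q by auto
    qed
    then show "i \<in> (\<lambda>q. xs ! q) ` {..<p}" using q by auto
  qed
qed

lemma sum_prefix:
  fixes key :: "nat \<Rightarrow> 'b::linorder"
  assumes d: "distinct xs" and so: "sorted (map key xs)" and inj: "inj_on key (set xs)"
    and p: "p < length xs"
  shows "(\<Sum>q<p. f (xs ! q)) = (\<Sum>i\<in>{i \<in> set xs. key i < key (xs ! p)}. (f i :: int))"
proof -
  have "inj_on (\<lambda>q. xs ! q) {..<p}" using d p by (intro inj_on_nth) auto
  then have "(\<Sum>i\<in>(\<lambda>q. xs ! q) ` {..<p}. f i) = (\<Sum>q<p. f (xs ! q))"
    by (simp add: sum.reindex)
  then show ?thesis using sorted_prefix_set[OF assms] by simp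
qed

definition G :: "step list \<Rightarrow> nat \<Rightarrow> nat \<Rightarrow> int" where
  "G w i j = (if is_red (w ! j) \<and> (rank w i < rank w j \<or> (rank w i = rank w j \<and> j < i))
     then step_val (w ! i) else 0)"

lemma area_sweep: "area (sweep w) = (\<Sum>j<length w. \<Sum>i<length w. G w i j)"
proof -
  define n where "n = length w"
  define key where "key = (\<lambda>i. (rank w i, - int i))"
  define ps where "ps = sort_key key [0..<n]"
  have sw: "sweep w = map (\<lambda>i. w ! i) ps" by (simp add: sweep_def ps_def n_def key_def)
  have lps: "length ps = n" by (simp add: ps_def)
  have dps: "distinct ps" by (simp add: ps_def)
  have sps: "set ps = {..<n}" by (auto simp: ps_def)
  have sorps: "sorted (map key ps)" by (simp add: ps_def)
  have injk: "inj_on key (set ps)" by (auto simp: key_def inj_on_def)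
  have keylt: "key i < key j \<longleftrightarrow> (rank w i < rank w j \<or> (rank w i = rank w j \<and> j < i))" for i j
    by (auto simp: key_def less_prod_def)
  have swn: "sweep w ! p = w ! (ps ! p)" if "p < n" for p using that by (simp add: sw lps)
  define h where "h j = (if is_red (w ! j) then (\<Sum>i\<in>{i \<in> {..<n}. key i < key j}. step_val (w ! i)) else 0)" for j
  have rk: "rank (sweep w) p = (\<Sum>i\<in>{i \<in> {..<n}. key i < key (ps ! p)}. step_val (w ! i))" if "p < n" for p
  proof -
    have "rank (sweep w) p = (\<Sum>q<p. step_val (w ! (ps ! q)))"
      unfolding rank_def sw using that lps by simp
    also have "\<dots> = (\<Sum>i\<in>{i \<in> set ps. key i < key (ps ! p)}. step_val (w ! i))"
      by (rule sum_prefix[OF dps sorps injk]) (simp add: lps that)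
    finally show ?thesis by (simp add: sps)
  qed
  have "area (sweep w) = (\<Sum>p\<in>{p. p < n \<and> is_red (sweep w ! p)}. rank (sweep w) p)"
    by (simp add: area_def sw lps)
  also have "\<dots> = (\<Sum>p<n. if is_red (sweep w ! p) then rank (sweep w) p else 0)"
  proof -
    have "{p. p < n \<and> is_red (sweep w ! p)} = {p \<in> {..<n}. is_red (sweep w ! p)}" by auto
    then show ?thesis by (simp only: sum.inter_filter[symmetric] finite_lessThan)
  qed
  also have "\<dots> = (\<Sum>p<n. h (ps ! p))"
    by (rule sum.cong) (auto simp: h_def rk swn)
  also have "\<dots> = (\<Sum>j\<in>set ps. h j)"
  proof -
    have i: "inj_on (\<lambda>q. ps ! q) {..<n}" using dps lps by (intro inj_on_nth) auto
    have im: "(\<lambda>q. ps ! q) ` {..<n} = set ps" using lps by (auto simp: set_conv_nth)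
    show ?thesis using sum.reindex[OF i, of h] unfolding im by simp
  qed
  also have "\<dots> = (\<Sum>j<n. \<Sum>i<n. G w i j)"
    unfolding sps
  proof (rule sum.cong[OF refl])
    fix j
    show "h j = (\<Sum>i<n. G w i j)"
    proof (cases "is_red (w ! j)")
      case True
      have "h j = (\<Sum>i<n. if key i < key j then step_val (w ! i) else 0)"
        using True by (simp only: h_def if_True sum.inter_filter[OF finite_lessThan])
      also have "\<dots> = (\<Sum>i<n. G w i j)"
        by (rule sum.cong[OF refl]) (simp add: G_def keylt True)
      finally show ?thesis .
    next
      case False then show ?thesis by (simp add: h_def G_def)
    qed
  qed
  finally show ?thesis by (simp add: n_def)
qed


definition F :: "step list \<Rightarrow> nat \<Rightarrow> nat \<Rightarrow> int" where
  "F w i j = (if i < j then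
     (if w ! i = Blue \<and> is_red (w ! j) \<and> rank w j \<le> rank w i \<and> rank w i \<le> rank w (Suc j) then 1 else 0)
   + (if is_red (w ! i) \<and> is_red (w ! j) then
       (if rank w i \<ge> rank w j \<and> rank w (Suc j) > rank w (Suc i)
        then rank w (Suc j) - rank w (Suc i) else 0)
     + (if rank w i < rank w j \<and> rank w (Suc j) < rank w (Suc i)
        then rank w (Suc i) - rank w (Suc j) else 0) else 0)
   else 0)"

lemma dinv_sum: "dinv w = (\<Sum>i<length w. \<Sum>j<length w. F w i j)"
proof -
  define n where "n = length w"
  define U where "U = {..<n} \<times> {..<n}"
  have fU: "finite U" by (simp add: U_def)
  define C where "C = (\<lambda>(i, j). i < j \<and> w ! i = Blue \<and> is_red (w ! j)
                               \<and> rank w j \<le> rank w i \<and> rank w i \<le> rank w (Suc j))"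
  define D where "D = (\<lambda>(i, j). i < j \<and> is_red (w ! i) \<and> is_red (w ! j))"
  define g where "g = (\<lambda>(i, j). (if rank w i \<ge> rank w j \<and> rank w (Suc j) > rank w (Suc i)
       then rank w (Suc j) - rank w (Suc i) else 0)
    + (if rank w i < rank w j \<and> rank w (Suc j) < rank w (Suc i)
       then rank w (Suc i) - rank w (Suc j) else 0))"
  have e1: "{(i, j). i < j \<and> j < length w \<and> w ! i = Blue \<and> is_red (w ! j)
                               \<and> rank w j \<le> rank w i \<and> rank w i \<le> rank w (Suc j)} = {p \<in> U. C p}"
    by (auto simp: U_def C_def n_def)
  have e2: "{(i, j). i < j \<and> j < length w \<and> is_red (w ! i) \<and> is_red (w ! j)} = {p \<in> U. D p}"
    by (auto simp: U_def D_def n_def)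
  have s1: "sweep_dinv w = (\<Sum>p\<in>U. if C p then 1 else 0)"
    unfolding sweep_dinv_def e1 by (simp add: sum.inter_filter[OF fU, symmetric])
  have s2: "red_dinv w = (\<Sum>p\<in>U. if D p then g p else 0)"
    unfolding red_dinv_def e2 g_def[symmetric] by (simp add: sum.inter_filter[OF fU])
  have "dinv w = (\<Sum>p\<in>U. (if C p then 1 else 0) + (if D p then g p else 0))"
    by (simp add: dinv_def s1 s2 sum.distrib)
  also have "\<dots> = (\<Sum>p\<in>U. F w (fst p) (snd p))"
    by (rule sum.cong[OF refl]) (auto simp: C_def D_def g_def F_def)
  also have "\<dots> = (\<Sum>i<n. \<Sum>j<n. F w i j)"
    unfolding U_def by (simp add: sum.cartesian_product split_def)
  finally show ?thesis by (simp add: n_def)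
qed

definition cross :: "step list \<Rightarrow> int \<Rightarrow> nat \<Rightarrow> int" where
  "cross w L i = (if w ! i = Blue \<and> rank w i = L then 1 else 0)
      - (if is_red (w ! i) \<and> rank w i < L \<and> L \<le> rank w (Suc i) then 1 else 0)"

lemma cross_sum':
  "p \<le> q \<Longrightarrow> (\<Sum>i\<in>{p..<q}. cross w L i) = (if L \<le> rank w p then 1 else 0) - (if L \<le> rank w q then 1 else 0)"
  unfolding cross_def by (rule cross_sum)


theorem lemma3p3:
  fixes kv :: "nat list" and Db :: "step list" and s :: nat
  assumes pos: "\<forall>k\<in>set kv. k > 0"
    and dyck: "is_kdyck kv Db"
    and area_pos: "area Db > 0"
    and s_lt: "s < length Db"
    and s_red: "is_red (Db ! s)"
    and s_max: "\<forall>j<length Db. is_red (Db ! j) \<longrightarrow> rank Db j \<le> rank Db s"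
    and s_rightmost: "\<forall>j<length Db. s < j \<and> is_red (Db ! j) \<longrightarrow> rank Db j < rank Db s"
  shows "dinv Db - dinv (swap_adj Db s) = area (sweep Db) - area (sweep (swap_adj Db s))"
proof -
  define w' where "w' = swap_adj Db s"
  define n where "n = length Db"
  define a where "a = rank Db s"
  obtain k where Sk: "Db ! s = Red k" using s_red by (cases "Db ! s") auto
  have kpos: "k > 0"
    using red_in_lengths[OF s_lt Sk] dyck pos by (auto simp: is_kdyck_def)
  have nonneg: "\<And>m. m \<le> n \<Longrightarrow> rank Db m \<ge> 0" using dyck by (auto simp: is_kdyck_def n_def)
  have rn: "rank Db n = 0"
    using dyck by (simp add: n_def rank_len step_sum is_kdyck_def)
  have r1: "rank Db (Suc s) = a + int k" unfolding a_def using Sk by (simp add: rank_Suc)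
  have a0: "a \<ge> 0" using nonneg s_lt by (simp add: a_def n_def)
  have s1: "Suc s < n"
  proof (rule ccontr)
    assume "\<not> Suc s < n" then have "Suc s = n" using s_lt n_def by simp
    then show False using rn r1 a0 kpos by simp
  qed
  have b1: "Db ! Suc s = Blue"
  proof (cases "Db ! Suc s")
    case (Red k')
    then have "rank Db (Suc s) \<le> a" using s_max s1 by (auto simp: a_def n_def)
    then show ?thesis using r1 kpos by simp
  qed simp
  have r2: "rank Db (Suc (Suc s)) = a + int k - 1" by (simp add: rank_Suc[of Db "Suc s"] r1 b1)
  have a1: "a \<ge> 1"
  proof (rule ccontr)
    assume "\<not> a \<ge> 1" then have "a \<le> 0" by simp
    then have "area Db \<le> 0" unfolding area_def
      using s_max by (intro sum_nonpos) (auto simp: a_def)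
    then show False using area_pos by simp
  qed
  have l': "length w' = n" by (simp add: w'_def swap_adj_def n_def)
  have w's: "w' ! s = Blue" using s1 b1 by (simp add: w'_def swap_adj_def n_def nth_list_update)
  have w's1: "w' ! Suc s = Red k" using s1 Sk by (simp add: w'_def swap_adj_def n_def nth_list_update)
  have w'o: "w' ! m = Db ! m" if "m \<noteq> s" "m \<noteq> Suc s" for m
    using that by (simp add: w'_def swap_adj_def nth_list_update)
  have rlo: "rank w' m = rank Db m" if "m \<le> s" for m
    unfolding rank_def using that by (intro sum.cong) (auto simp: w'o)
  have rs1: "rank w' (Suc s) = a - 1" by (simp add: rank_Suc rlo a_def w's)
  have rhi: "rank w' m = rank Db m" if "Suc (Suc s) \<le> m" for m
    using that
  proof (induction m rule: dec_induct)
    case base then show ?case by (simp add: rank_Suc[of w' "Suc s"] rs1 w's1 r2)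
  next
    case (step m) then show ?case by (simp add: rank_Suc w'o)
  qed
  have rr: "rank w' m = rank Db m" if "m \<noteq> Suc s" for m
    using rlo rhi that by (cases "m \<le> s") auto
  define Os where "Os = {..<n} - {s, Suc s}"
  have OO1: "F Db x y = F w' x y" if "x \<in> Os" "y \<in> Os" for x y
    using that unfolding F_def Os_def by (simp add: w'o rr)
  have OO2: "G Db y x = G w' y x" if "x \<in> Os" "y \<in> Os" for x y
    using that unfolding G_def Os_def by (auto simp: w'o rr)
  have d1: "dinv Db = (\<Sum>x\<in>Os. \<Sum>y\<in>Os. F Db x y)
     + (\<Sum>j\<in>Os. F Db s j + F Db (Suc s) j + F Db j s + F Db j (Suc s))
     + F Db s s + F Db s (Suc s) + F Db (Suc s) s + F Db (Suc s) (Suc s)"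
    unfolding dinv_sum n_def[symmetric] Os_def by (rule dsplit[OF s1])
  have d2: "dinv w' = (\<Sum>x\<in>Os. \<Sum>y\<in>Os. F w' x y)
     + (\<Sum>j\<in>Os. F w' s j + F w' (Suc s) j + F w' j s + F w' j (Suc s))
     + F w' s s + F w' s (Suc s) + F w' (Suc s) s + F w' (Suc s) (Suc s)"
    unfolding dinv_sum l' Os_def by (rule dsplit[OF s1])
  have e1: "area (sweep Db) = (\<Sum>x\<in>Os. \<Sum>y\<in>Os. G Db y x)
     + (\<Sum>j\<in>Os. G Db j s + G Db j (Suc s) + G Db s j + G Db (Suc s) j)
     + G Db s s + G Db (Suc s) s + G Db s (Suc s) + G Db (Suc s) (Suc s)"
    unfolding area_sweep n_def[symmetric] Os_def by (rule dsplit[OF s1, where H="\<lambda>x y. G Db y x"])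
  have e2: "area (sweep w') = (\<Sum>x\<in>Os. \<Sum>y\<in>Os. G w' y x)
     + (\<Sum>j\<in>Os. G w' j s + G w' j (Suc s) + G w' s j + G w' (Suc s) j)
     + G w' s s + G w' (Suc s) s + G w' s (Suc s) + G w' (Suc s) (Suc s)"
    unfolding area_sweep l' Os_def by (rule dsplit[OF s1, where H="\<lambda>x y. G w' y x"])
  have c1: "F Db s s + F Db s (Suc s) + F Db (Suc s) s + F Db (Suc s) (Suc s) = 0"
    by (simp add: F_def b1)
  have c2: "F w' s s + F w' s (Suc s) + F w' (Suc s) s + F w' (Suc s) (Suc s) = 1"
    using kpos by (simp add: F_def w's w's1 rs1 rr a_def[symmetric] rank_Suc[of w' "Suc s"])
  have c3: "G Db s s + G Db (Suc s) s + G Db s (Suc s) + G Db (Suc s) (Suc s) = 0"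
    using kpos by (simp add: G_def b1 Sk r1 a_def[symmetric])
  have c4: "G w' s s + G w' (Suc s) s + G w' s (Suc s) + G w' (Suc s) (Suc s) = 0"
    by (simp add: G_def w's w's1 rs1 rr a_def[symmetric])
  have delta: "(F Db s j + F Db (Suc s) j + F Db j s + F Db j (Suc s))
      - (F w' s j + F w' (Suc s) j + F w' j s + F w' j (Suc s))
      - (G Db j s + G Db j (Suc s) + G Db s j + G Db (Suc s) j)
      + (G w' j s + G w' j (Suc s) + G w' s j + G w' (Suc s) j)
      = (if j < s then cross Db (a + int k) j else cross Db a j)" if j: "j \<in> Os" for j
  proof -
    have jn: "j < n" "j \<noteq> s" "j \<noteq> Suc s" using j by (auto simp: Os_def)
    have wj: "w' ! j = Db ! j" using jn by (simp add: w'o)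
    have rj: "rank w' j = rank Db j" "rank w' (Suc j) = rank Db (Suc j)" using jn by (simp_all add: rr)
    have rw's: "rank w' s = a" by (simp add: rr a_def)
    have rw'ss: "rank w' (Suc (Suc s)) = a + int k - 1" by (simp add: rr r2)
    show ?thesis
    proof (cases "Db ! j")
      case (Red kj)
      have rs: "rank Db (Suc j) = rank Db j + int kj" by (simp add: rank_Suc Red)
      have bd: "rank Db j \<le> a" using s_max jn Red by (auto simp: a_def n_def)
      have bd2: "s < j \<Longrightarrow> rank Db j < a" using s_rightmost jn Red by (auto simp: a_def n_def)
      show ?thesis
      proof (cases "j < s")
        case True
        then show ?thesis using bd kpos
          by (simp add: F_def G_def cross_def wj rj rs Red w's w's1 b1 Sk r1 rs1 rw's rw'ss r2 a_def[symmetric]; arith)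
      next
        case False
        then have "Suc s < j" using jn by simp
        then show ?thesis using bd2 kpos
          by (simp add: F_def G_def cross_def wj rj rs Red w's w's1 b1 Sk r1 rs1 rw's rw'ss r2 a_def[symmetric]; arith)
      qed
    next
      case Blue
      have rs: "rank Db (Suc j) = rank Db j - 1" by (simp add: rank_Suc Blue)
      show ?thesis
      proof (cases "j < s")
        case True
        then show ?thesis using kpos
          by (simp add: F_def G_def cross_def wj rj rs Blue w's w's1 b1 Sk r1 rs1 rw's rw'ss r2 a_def[symmetric]; arith)
      next
        case False
        then have "Suc s < j" using jn by simp
        then show ?thesis using kpos
          by (simp add: F_def G_def cross_def wj rj rs Blue w's w's1 b1 Sk r1 rs1 rw's rw'ss r2 a_def[symmetric]; arith)
      qed
    qed
  qed
  have sumO: "(\<Sum>j\<in>Os. (if j < s then cross Db (a + int k) j else cross Db a j)) = 1"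
  proof -
    have Oeq: "Os = {0..<s} \<union> {Suc (Suc s)..<n}" using s1 by (auto simp: Os_def)
    have "(\<Sum>j\<in>Os. (if j < s then cross Db (a + int k) j else cross Db a j))
        = (\<Sum>j\<in>{0..<s}. cross Db (a + int k) j) + (\<Sum>j\<in>{Suc (Suc s)..<n}. cross Db a j)"
      unfolding Oeq by (subst sum.union_disjoint) auto
    also have "\<dots> = 1"
      using cross_sum'[of 0 s Db "a + int k"] cross_sum'[of "Suc (Suc s)" n Db a] s1 kpos a1
      by (simp add: a_def[symmetric] r2 rn)
    finally show ?thesis .
  qed
  have OOF: "(\<Sum>x\<in>Os. \<Sum>y\<in>Os. F Db x y) = (\<Sum>x\<in>Os. \<Sum>y\<in>Os. F w' x y)"
    using OO1 by (intro sum.cong refl) auto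
  have OOG: "(\<Sum>x\<in>Os. \<Sum>y\<in>Os. G Db y x) = (\<Sum>x\<in>Os. \<Sum>y\<in>Os. G w' y x)"
    using OO2 by (intro sum.cong refl) auto
  have "(\<Sum>j\<in>Os. F Db s j + F Db (Suc s) j + F Db j s + F Db j (Suc s))
      - (\<Sum>j\<in>Os. F w' s j + F w' (Suc s) j + F w' j s + F w' j (Suc s))
      - (\<Sum>j\<in>Os. G Db j s + G Db j (Suc s) + G Db s j + G Db (Suc s) j)
      + (\<Sum>j\<in>Os. G w' j s + G w' j (Suc s) + G w' s j + G w' (Suc s) j) = 1"
    unfolding sum_subtractf[symmetric] sum.distrib[symmetric]
    by (rule trans[OF sum.cong[OF refl delta] sumO])
  then show ?thesis
    unfolding w'_def[symmetric] d1 d2 e1 e2 OOF OOG using c1 c2 c3 c4 by linarith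
qed

end
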